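(* Let $d\ge2$, $n\ge1$, and $\gamma$ a positive conductivity on the lattice graph below. Then $T_2^{(t)}$ is injective for every $t$ with $d-1\le t\le dn-1$, and $T_2'^{(t)}$ is injective for every $t$ with $d\le t\le dn$.
   Context: Lattice: $D=\{x\in\mathbb Z^d:1\le x_i\le n\ \forall i\}$, $\partial D=\{p\in\mathbb Z^d:\min_{q\in D}\|q-p\|_{\ell^1}=1\}$; $E$ = unordered pairs $pq\subseteq D\cup\partial D$ with $\|p-q\|_{\ell^1}=1$, not both in $\partial D$; $\mathcal N(p)=\{q:pq\in E\}$; each $b\in\partial D$ has a unique neighbour $q_b\in D$. Conductivity $\gamma:E\to(0,\infty)$, symmetric. With $s(x)=\sum_ix_i$: $L_t=\{x\in D:s(x)=t\}$, $L_t^{\mathcal S}=\{x\in D:s(x)\le t\}$, $K_t^+=\{x\in\partial D:s(x)=t,\max_ix_i=n+1\}$, $K_t^-=\{x\in\partial D:s(x)=t,\min_ix_i=0\}$, $K_t^{\mathcal S\pm}=\bigcup_{\ell\le t}K_\ell^\pm$, $J_t^{\mathcal S}=K_t^{\mathcal S-}\cup K_{t+1}^{\mathcal S+}$. $T_2^{(t)}:\mathbb R^{L_{t+1}}\to\mathbb R^{\partial D\setminus J_t^{\mathcal S}}$: for $\mathbf y$, let $\mathbf w$ be the unique function on $(D\setminus L_t^{\mathcal S})\cup(\partial D\setminus J_t^{\mathcal S})$ with $\mathbf w=\mathbf y$ on $L_{t+1}$, $\mathbf w=0$ on $\partial D\setminus J_t^{\mathcal S}$, $\sum_{q\in\mathcal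 N(p)}\gamma_{pq}(\mathbf w_q-\mathbf w_p)=0$ for $p\in D\setminus L_{t+1}^{\mathcal S}$; $(T_2^{(t)}\mathbf y)_b=\gamma_{bq_b}(\mathbf w_{q_b}-\mathbf w_b)$. $T_2'^{(t)}:\mathbb R^{L_t}\to\mathbb R^{J_{t-1}^{\mathcal S}}$: for $\mathbf x$, let $\mathbf u$ be the unique function on $L_t^{\mathcal S}\cup J_{t-1}^{\mathcal S}$ with $\mathbf u=\mathbf x$ on $L_t$, $\mathbf u=0$ on $J_{t-1}^{\mathcal S}$, $\sum_{q\in\mathcal N(p)}\gamma_{pq}(\mathbf u_q-\mathbf u_p)=0$ for $p\in L_{t-1}^{\mathcal S}$; $(T_2'^{(t)}\mathbf x)_b=\gamma_{bq_b}(\mathbf u_{q_b}-\mathbf u_b)$. *)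

theory Defs
  imports Complex_Main
begin

text \<open>Points of Z^d are represented as integer lists of length d
  (coordinate i is x ! i, for i < d).\<close>

definition l1dist :: "int list \<Rightarrow> int list \<Rightarrow> int" where
  "l1dist p q = (\<Sum>i<length p. \<bar>p ! i - q ! i\<bar>)"

definition Dom :: "nat \<Rightarrow> nat \<Rightarrow> int list set" where
  "Dom d n = {x. length x = d \<and> (\<forall>i<d. 1 \<le> x ! i \<and> x ! i \<le> int n)}"

definition Bd :: "nat \<Rightarrow> nat \<Rightarrow> int list set" where
  "Bd d n = {p. length p = d \<and> Min ((\<lambda>q. l1dist q p) ` Dom d n) = 1}"

definition Edge :: "nat \<Rightarrow> nat \<Rightarrow> int list \<Rightarrow> int list \<Rightarrow> bool" where
  "Edge d n p q \<longleftrightarrow> p \<in> Dom d n \<union> Bd d n \<and> q \<in> Dom d n \<union> Bd d n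
     \<and> l1dist p q = 1 \<and> \<not> (p \<in> Bd d n \<and> q \<in> Bd d n)"

definition Nbr :: "nat \<Rightarrow> nat \<Rightarrow> int list \<Rightarrow> int list set" where
  "Nbr d n p = {q. Edge d n p q}"

definition qb :: "nat \<Rightarrow> nat \<Rightarrow> int list \<Rightarrow> int list" where
  "qb d n b = (THE q. q \<in> Dom d n \<and> l1dist q b = 1)"

definition conductivity :: "nat \<Rightarrow> nat \<Rightarrow> (int list \<Rightarrow> int list \<Rightarrow> real) \<Rightarrow> bool" where
  "conductivity d n \<gamma> \<longleftrightarrow>
     (\<forall>p q. Edge d n p q \<longrightarrow> \<gamma> p q > 0 \<and> \<gamma> p q = \<gamma> q p)"

definition ssum :: "int list \<Rightarrow> int" where
  "ssum x = sum_list x"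

definition Lev :: "nat \<Rightarrow> nat \<Rightarrow> int \<Rightarrow> int list set" where
  "Lev d n t = {x \<in> Dom d n. ssum x = t}"

definition LevS :: "nat \<Rightarrow> nat \<Rightarrow> int \<Rightarrow> int list set" where
  "LevS d n t = {x \<in> Dom d n. ssum x \<le> t}"

definition Kplus :: "nat \<Rightarrow> nat \<Rightarrow> int \<Rightarrow> int list set" where
  "Kplus d n t = {x \<in> Bd d n. ssum x = t \<and> Max (set x) = int n + 1}"

definition Kminus :: "nat \<Rightarrow> nat \<Rightarrow> int \<Rightarrow> int list set" where
  "Kminus d n t = {x \<in> Bd d n. ssum x = t \<and> Min (set x) = 0}"

definition KSplus :: "nat \<Rightarrow> nat \<Rightarrow> int \<Rightarrow> int list set" where
  "KSplus d n t = (\<Union>l\<in>{l. l \<le> t}. Kplus d n l)"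

definition KSminus :: "nat \<Rightarrow> nat \<Rightarrow> int \<Rightarrow> int list set" where
  "KSminus d n t = (\<Union>l\<in>{l. l \<le> t}. Kminus d n l)"

definition JS :: "nat \<Rightarrow> nat \<Rightarrow> int \<Rightarrow> int list set" where
  "JS d n t = KSminus d n t \<union> KSplus d n (t + 1)"

text \<open>Functions on a finite set A are represented as functions on all points
  vanishing outside A.\<close>

definition T2 :: "nat \<Rightarrow> nat \<Rightarrow> (int list \<Rightarrow> int list \<Rightarrow> real) \<Rightarrow> int
                   \<Rightarrow> (int list \<Rightarrow> real) \<Rightarrow> (int list \<Rightarrow> real)" where
  "T2 d n \<gamma> t y =
    (let w = (THE w. (\<forall>x. x \<notin> (Dom d n - LevS d n t) \<union> (Bd d n - JS d n t) \<longrightarrow> w x = 0)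
                 \<and> (\<forall>x\<in>Lev d n (t + 1). w x = y x)
                 \<and> (\<forall>x\<in>Bd d n - JS d n t. w x = 0)
                 \<and> (\<forall>p\<in>Dom d n - LevS d n (t + 1).
                       (\<Sum>q\<in>Nbr d n p. \<gamma> p q * (w q - w p)) = 0))
     in (\<lambda>b. if b \<in> Bd d n - JS d n t then \<gamma> b (qb d n b) * (w (qb d n b) - w b) else 0))"

definition T2' :: "nat \<Rightarrow> nat \<Rightarrow> (int list \<Rightarrow> int list \<Rightarrow> real) \<Rightarrow> int
                   \<Rightarrow> (int list \<Rightarrow> real) \<Rightarrow> (int list \<Rightarrow> real)" where
  "T2' d n \<gamma> t x =
    (let u = (THE u. (\<forall>z. z \<notin> LevS d n t \<union> JS d n (t - 1) \<longrightarrow> u z = 0)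
                 \<and> (\<forall>z\<in>Lev d n t. u z = x z)
                 \<and> (\<forall>z\<in>JS d n (t - 1). u z = 0)
                 \<and> (\<forall>p\<in>LevS d n (t - 1).
                       (\<Sum>q\<in>Nbr d n p. \<gamma> p q * (u q - u p)) = 0))
     in (\<lambda>b. if b \<in> JS d n (t - 1) then \<gamma> b (qb d n b) * (u (qb d n b) - u b) else 0))"

end

theory Submission
  imports Defs "HOL-Library.Function_Algebras"
begin

lemma sum_fun_apply: "(\<Sum>h\<in>H. f h) x = (\<Sum>h\<in>H. (f h x :: real))"
proof (cases "finite H")
  case True
  then show ?thesis by (induction H rule: finite_induct) (auto simp: plus_fun_def zero_fun_def)
next
  case False
  then show ?thesis by (simp add: zero_fun_def)
qed

definition scf :: "real \<Rightarrow> ('a \<Rightarrow> real) \<Rightarrow> ('a \<Rightarrow> real)" where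
  "scf c f = (\<lambda>x. c * f x)"

lemma vs_scf: "vector_space scf"
  by unfold_locales (auto simp: scf_def algebra_simps fun_eq_iff plus_fun_def)

lemma inj_surj_fin:
  fixes A :: "('a \<Rightarrow> real) \<Rightarrow> ('a \<Rightarrow> real)" and H :: "'a set"
  assumes fin: "finite H"
    and add: "\<And>u v. A (u + v) = A u + A v"
    and scl: "\<And>c u. A (scf c u) = scf c (A u)"
    and maps: "\<And>u x. x \<notin> H \<Longrightarrow> A u x = 0"
    and inj: "\<And>u. (\<forall>x. x \<notin> H \<longrightarrow> u x = 0) \<Longrightarrow> A u = 0 \<Longrightarrow> u = 0"
    and b: "\<forall>x. x \<notin> H \<longrightarrow> b x = 0"
  shows "\<exists>u. (\<forall>x. x \<notin> H \<longrightarrow> u x = 0) \<and> A u = b"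
proof (rule ccontr)
  assume nex: "\<not> ?thesis"
  interpret V: vector_space scf by (rule vs_scf)
  interpret L: module_hom scf scf A
    by unfold_locales (auto simp: add scl)
  define VV where "VV = {u::'a\<Rightarrow>real. \<forall>x. x \<notin> H \<longrightarrow> u x = 0}"
  define \<delta> where "\<delta> = (\<lambda>h::'a. (\<lambda>x::'a. if x = h then 1 else 0::real))"
  define B where "B = \<delta> ` H"
  have inj\<delta>: "inj_on \<delta> H" unfolding \<delta>_def inj_on_def by (metis zero_neq_one)
  have finB: "finite B" using fin B_def by simp
  have cardB: "card B = card H" using inj\<delta> B_def card_image by blast
  have subV: "V.subspace VV"
    unfolding V.subspace_def VV_def by (auto simp: scf_def plus_fun_def zero_fun_def)
  have BV: "B \<subseteq> VV" unfolding B_def VV_def \<delta>_def by auto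
  have spanB: "V.span B = VV"
  proof
    show "V.span B \<subseteq> VV" using V.span_minimal[OF BV subV] .
    show "VV \<subseteq> V.span B"
    proof
      fix u assume "u \<in> VV"
      then have "u = (\<Sum>h\<in>H. scf (u h) (\<delta> h))"
      proof -
        have "\<And>x. (\<Sum>h\<in>H. u h * (if x = h then 1 else 0)) = (\<Sum>h\<in>H. if x = h then u h else 0)"
          by (rule sum.cong) auto
        then show ?thesis using \<open>u \<in> VV\<close>
          unfolding VV_def by (auto simp: fun_eq_iff sum_fun_apply scf_def \<delta>_def fin)
      qed
      also have "\<dots> \<in> V.span B"
        by (intro V.span_sum V.span_scale V.span_base) (auto simp: B_def)
      finally show "u \<in> V.span B" .
    qed
  qed
  have indB: "V.independent B"
  proof (rule V.independent_if_scalars_zero[OF finB])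
    fix f x assume s: "(\<Sum>x\<in>B. scf (f x) x) = 0" and x: "x \<in> B"
    then obtain h where h: "h \<in> H" "x = \<delta> h" unfolding B_def by auto
    have "(\<Sum>x\<in>B. scf (f x) x) = (\<Sum>h\<in>H. scf (f (\<delta> h)) (\<delta> h))"
      unfolding B_def by (rule sum.reindex[OF inj\<delta>, unfolded comp_def])
    then have "(\<Sum>h'\<in>H. scf (f (\<delta> h')) (\<delta> h')) = 0" using s by simp
    then have "(\<Sum>h'\<in>H. scf (f (\<delta> h')) (\<delta> h')) h = 0" by (simp add: zero_fun_def)
    then have "(\<Sum>h'\<in>H. f (\<delta> h') * (if h = h' then 1 else 0)) = 0"
      by (simp add: sum_fun_apply scf_def \<delta>_def)
    moreover have "(\<Sum>h'\<in>H. f (\<delta> h') * (if h = h' then 1 else 0)) = (\<Sum>h'\<in>H. if h = h' then f (\<delta> h') else 0)"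
      by (rule sum.cong) auto
    ultimately show "f x = 0" using h fin by simp
  qed
  have injV: "inj_on A VV"
  proof (rule inj_onI)
    fix u v assume "u \<in> VV" "v \<in> VV" "A u = A v"
    then have "A (u - v) = 0" "\<forall>x. x \<notin> H \<longrightarrow> (u - v) x = 0"
      by (auto simp: L.diff VV_def)
    then have "u - v = 0" using inj by blast
    then show "u = v" by simp
  qed
  have indC: "V.independent (A ` B)"
    using L.independent_injective_image[OF indB] injV spanB by simp
  have cardC: "card (A ` B) = card B"
    using injV BV by (meson card_image inj_on_subset)
  have spanC: "V.span (A ` B) = A ` VV" using L.span_image spanB by simp
  have AV: "A ` VV \<subseteq> VV" unfolding VV_def using maps by auto
  have bV: "b \<in> VV" using b VV_def by simp
  have bnot: "b \<notin> A ` VV" using nex VV_def by auto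
  have ind2: "V.independent (insert b (A ` B))"
    using V.independent_insertI[OF _ indC] bnot spanC by simp
  have sub2: "insert b (A ` B) \<subseteq> V.span B" using bV AV BV spanB by auto
  have "finite (insert b (A ` B)) \<and> card (insert b (A ` B)) \<le> card B"
    using V.independent_span_bound[OF finB ind2 sub2] .
  moreover have "b \<notin> A ` B" using bnot BV by auto
  ultimately show False using cardC finB by simp
qed

lemma maxp:
  fixes u :: "'a \<Rightarrow> real" and f :: "'a \<Rightarrow> int"
  assumes fin: "finite H"
    and finN: "\<forall>p\<in>H. finite (N p)"
    and gpos: "\<forall>p\<in>H. \<forall>q\<in>N p. g p q > 0"
    and zero: "\<forall>x. x \<notin> H \<longrightarrow> u x = 0"
    and harm: "\<forall>p\<in>H. (\<Sum>q\<in>N p. g p q * (u q - u p)) = 0"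
    and esc: "\<forall>p\<in>H. \<exists>q\<in>N p. f q > f p"
  shows "\<forall>p\<in>H. u p \<le> 0"
proof (rule ccontr)
  assume "\<not> ?thesis"
  then obtain p0 where p0: "p0 \<in> H" "u p0 > 0" by auto
  define M where "M = Max (u ` H)"
  have Mge: "\<And>x. x \<in> H \<Longrightarrow> u x \<le> M" unfolding M_def using fin by (intro Max_ge) auto
  have M0: "M > 0" using p0 Mge[of p0] by linarith
  define S where "S = {p\<in>H. u p = M}"
  have "M \<in> u ` H" unfolding M_def using fin p0 by (intro Max_in) auto
  then have Sne: "S \<noteq> {}" using S_def by auto
  have finS: "finite S" using fin S_def by simp
  define Fm where "Fm = Max (f ` S)"
  have "Fm \<in> f ` S" unfolding Fm_def using Sne finS by (intro Max_in) auto
  then obtain p where p: "p \<in> S" "f p = Fm" by auto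
  have pH: "p \<in> H" and up: "u p = M" using p S_def by auto
  obtain q where q: "q \<in> N p" "f q > f p" using esc pH by auto
  have le: "\<forall>r\<in>N p. u r \<le> M"
  proof
    fix r assume "r \<in> N p"
    show "u r \<le> M"
    proof (cases "r \<in> H")
      case True then show ?thesis by (rule Mge)
    next
      case False then have "u r = 0" using zero by blast
      then show ?thesis using M0 by linarith
    qed
  qed
  have "\<forall>r\<in>N p. 0 \<le> - (g p r * (u r - u p))"
  proof
    fix r assume r: "r \<in> N p"
    have "g p r > 0" using gpos pH r by auto
    moreover have "u r - u p \<le> 0" using le r up by auto
    ultimately show "0 \<le> - (g p r * (u r - u p))" by (simp add: mult_nonneg_nonpos)
  qed
  moreover have "(\<Sum>r\<in>N p. - (g p r * (u r - u p))) = 0"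
  proof -
    have "(\<Sum>r\<in>N p. - (g p r * (u r - u p))) = - (\<Sum>r\<in>N p. g p r * (u r - u p))"
      by (rule sum_negf)
    then show ?thesis using harm pH by simp
  qed
  moreover have "finite (N p)" using finN pH by blast
  ultimately have "\<forall>r\<in>N p. - (g p r * (u r - u p)) = 0"
    using sum_nonneg_eq_0_iff[of "N p" "\<lambda>r. - (g p r * (u r - u p))"] by simp
  then have "g p q * (u q - u p) = 0" using q by auto
  moreover have "g p q > 0" using gpos pH q by blast
  ultimately have uq: "u q = M" using up by simp
  then have "q \<in> H" using zero M0 by (metis less_irrefl)
  then have "q \<in> S" using uq S_def by auto
  then have "f q \<le> Fm" using finS Fm_def by simp
  then show False using q p by simp
qed

lemma uniqp:
  fixes u :: "'a \<Rightarrow> real" and f :: "'a \<Rightarrow> int"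
  assumes fin: "finite H"
    and finN: "\<forall>p\<in>H. finite (N p)"
    and gpos: "\<forall>p\<in>H. \<forall>q\<in>N p. g p q > 0"
    and zero: "\<forall>x. x \<notin> H \<longrightarrow> u x = 0"
    and harm: "\<forall>p\<in>H. (\<Sum>q\<in>N p. g p q * (u q - u p)) = 0"
    and esc: "\<forall>p\<in>H. \<exists>q\<in>N p. f q > f p"
  shows "u = (\<lambda>x. 0)"
proof -
  have a: "\<forall>p\<in>H. u p \<le> 0" by (rule maxp[OF fin finN gpos zero harm esc])
  have harm': "\<forall>p\<in>H. (\<Sum>q\<in>N p. g p q * ((- u q) - (- u p))) = 0"
  proof
    fix p assume "p \<in> H"
    have "(\<Sum>q\<in>N p. g p q * ((- u q) - (- u p))) = - (\<Sum>q\<in>N p. g p q * (u q - u p))"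
    proof -
      have "(\<Sum>q\<in>N p. g p q * ((- u q) - (- u p))) = (\<Sum>q\<in>N p. - (g p q * (u q - u p)))"
        by (rule sum.cong) (simp_all add: algebra_simps)
      then show ?thesis by (simp add: sum_negf)
    qed
    then show "(\<Sum>q\<in>N p. g p q * ((- u q) - (- u p))) = 0" using harm \<open>p \<in> H\<close> by simp
  qed
  have b: "\<forall>p\<in>H. - u p \<le> 0"
    by (rule maxp[where u="\<lambda>x. - u x", OF fin finN gpos _ harm' esc]) (use zero in auto)
  show ?thesis
  proof
    fix x show "u x = 0"
    proof (cases "x \<in> H")
      case True
      then show ?thesis using a b by force
    qed (use zero in auto)
  qed
qed

lemma existp:
  fixes f :: "'a \<Rightarrow> int" and c :: "'a \<Rightarrow> real"
  assumes fin: "finite H"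
    and finN: "\<forall>p\<in>H. finite (N p)"
    and gpos: "\<forall>p\<in>H. \<forall>q\<in>N p. g p q > 0"
    and esc: "\<forall>p\<in>H. \<exists>q\<in>N p. f q > f p"
  shows "\<exists>u. (\<forall>x. x \<notin> H \<longrightarrow> u x = 0) \<and> (\<forall>p\<in>H. (\<Sum>q\<in>N p. g p q * (u q - u p)) = c p)"
proof -
  define r where "r = (\<lambda>(u::'a\<Rightarrow>real) x. if x \<in> H then u x else 0)"
  define A where "A = (\<lambda>u p. if p \<in> H then (\<Sum>q\<in>N p. g p q * (r u q - r u p)) else 0)"
  have add: "\<And>u v. A (u + v) = A u + A v"
  proof -
    fix u v :: "'a \<Rightarrow> real"
    have rr: "\<And>x. r (u+v) x = r u x + r v x" by (simp add: r_def plus_fun_def)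
    have "\<And>p. A (u + v) p = A u p + A v p"
    proof -
      fix p
      have "(\<Sum>q\<in>N p. g p q * (r (u+v) q - r (u+v) p)) = (\<Sum>q\<in>N p. g p q * (r u q - r u p) + g p q * (r v q - r v p))"
        by (rule sum.cong) (simp_all add: rr ring_distribs)
      also have "\<dots> = (\<Sum>q\<in>N p. g p q * (r u q - r u p)) + (\<Sum>q\<in>N p. g p q * (r v q - r v p))"
        by (rule sum.distrib)
      finally show "A (u + v) p = A u p + A v p" unfolding A_def by simp
    qed
    then show "A (u + v) = A u + A v" by (simp add: fun_eq_iff plus_fun_def)
  qed
  have scl: "\<And>c u. A (scf c u) = scf c (A u)"
    unfolding A_def r_def scf_def by (auto simp: fun_eq_iff sum_distrib_left ring_distribs mult.left_commute intro!: sum.cong)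
  have maps: "\<And>u x. x \<notin> H \<Longrightarrow> A u x = 0" unfolding A_def by simp
  have inj: "\<And>u. (\<forall>x. x \<notin> H \<longrightarrow> u x = 0) \<Longrightarrow> A u = 0 \<Longrightarrow> u = 0"
  proof -
    fix u :: "'a \<Rightarrow> real" assume z: "\<forall>x. x \<notin> H \<longrightarrow> u x = 0" and Au: "A u = 0"
    have ru: "r u = u" using z unfolding r_def by auto
    have "\<forall>p\<in>H. (\<Sum>q\<in>N p. g p q * (u q - u p)) = 0"
    proof
      fix p assume "p \<in> H"
      have "A u p = 0" using Au by (simp add: zero_fun_def)
      then show "(\<Sum>q\<in>N p. g p q * (u q - u p)) = 0" using \<open>p \<in> H\<close> ru unfolding A_def by simp
    qed
    then have "u = (\<lambda>x. 0)" using uniqp[OF fin finN gpos z _ esc] by blast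
    then show "u = 0" by (simp add: zero_fun_def)
  qed
  define b where "b = (\<lambda>p. if p \<in> H then c p else 0)"
  have "\<forall>x. x \<notin> H \<longrightarrow> b x = 0" unfolding b_def by simp
  from inj_surj_fin[OF fin add scl maps inj this]
  obtain u where u: "\<forall>x. x \<notin> H \<longrightarrow> u x = 0" "A u = b" by blast
  have ru: "r u = u" using u(1) unfolding r_def by auto
  show ?thesis
  proof (intro exI conjI ballI)
    show "\<forall>x. x \<notin> H \<longrightarrow> u x = 0" by (rule u(1))
    fix p assume "p \<in> H"
    have "A u p = b p" using u(2) by simp
    then show "(\<Sum>q\<in>N p. g p q * (u q - u p)) = c p" using \<open>p \<in> H\<close> ru unfolding A_def b_def by simp
  qed
qed

lemma generic_inj:
  fixes N :: "'a \<Rightarrow> 'a set" and g :: "'a \<Rightarrow> 'a \<Rightarrow> real" and f :: "'a \<Rightarrow> int"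
    and Q :: "'a \<Rightarrow> 'a"
  assumes fin: "finite H"
    and finN: "\<forall>p\<in>H. finite (N p)"
    and gpos: "\<forall>p\<in>H. \<forall>q\<in>N p. g p q > 0"
    and esc: "\<forall>p\<in>H. \<exists>q\<in>N p. f q > f p"
    and HR: "H \<subseteq> R" and YR: "Y \<subseteq> R" and HY: "H \<inter> Y = {}" and BoH: "Bo \<inter> H = {}"
    and BoY: "Bo \<inter> Y = {}" and RH: "R \<subseteq> H \<union> Y \<union> Bo"
    and hprop: "\<And>u. (\<forall>x\<in>Bo. u x = 0) \<Longrightarrow> (\<forall>p\<in>H. (\<Sum>q\<in>N p. g p q * (u q - u p)) = 0)
        \<Longrightarrow> (\<forall>b\<in>Bo. g b (Q b) * (u (Q b) - u b) = 0) \<Longrightarrow> (\<forall>x\<in>Y. u x = 0)"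
  shows "inj_on (\<lambda>y. let w = (THE w. (\<forall>x. x \<notin> R \<longrightarrow> w x = 0)
                 \<and> (\<forall>x\<in>Y. w x = y x)
                 \<and> (\<forall>x\<in>Bo. w x = 0)
                 \<and> (\<forall>p\<in>H. (\<Sum>q\<in>N p. g p q * (w q - w p)) = 0))
     in (\<lambda>b. if b \<in> Bo then g b (Q b) * (w (Q b) - w b) else 0)) {y. \<forall>z. z \<notin> Y \<longrightarrow> y z = 0}"
proof -
  define P where "P = (\<lambda>y w. (\<forall>x. x \<notin> R \<longrightarrow> w x = 0)
                 \<and> (\<forall>x\<in>Y. w x = y x)
                 \<and> (\<forall>x\<in>Bo. w x = 0)
                 \<and> (\<forall>p\<in>H. (\<Sum>q\<in>N p. g p q * (w q - w p)) = (0::real)))"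
  have diffharm: "\<forall>p\<in>H. (\<Sum>q\<in>N p. g p q * ((w1 q - w2 q) - (w1 p - w2 p))) = 0"
    if "P y1 w1" "P y2 w2" for y1 y2 w1 w2
  proof
    fix p assume pH: "p \<in> H"
    have "(\<Sum>q\<in>N p. g p q * ((w1 q - w2 q) - (w1 p - w2 p)))
        = (\<Sum>q\<in>N p. g p q * (w1 q - w1 p) - g p q * (w2 q - w2 p))"
      by (rule sum.cong) (simp_all add: algebra_simps)
    also have "\<dots> = (\<Sum>q\<in>N p. g p q * (w1 q - w1 p)) - (\<Sum>q\<in>N p. g p q * (w2 q - w2 p))"
      by (rule sum_subtractf)
    also have "\<dots> = 0" using that pH unfolding P_def by simp
    finally show "(\<Sum>q\<in>N p. g p q * ((w1 q - w2 q) - (w1 p - w2 p))) = 0" .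
  qed
  have uniq: "w1 = w2" if "P y w1" "P y w2" for y w1 w2
  proof -
    have z: "\<forall>x. x \<notin> H \<longrightarrow> w1 x - w2 x = 0"
    proof (intro allI impI)
      fix x assume "x \<notin> H"
      then have "x \<notin> R \<or> x \<in> Y \<or> x \<in> Bo" using RH by blast
      moreover have "\<forall>x. x \<notin> R \<longrightarrow> w1 x = 0" "\<forall>x\<in>Y. w1 x = y x" "\<forall>x\<in>Bo. w1 x = 0"
        "\<forall>x. x \<notin> R \<longrightarrow> w2 x = 0" "\<forall>x\<in>Y. w2 x = y x" "\<forall>x\<in>Bo. w2 x = 0"
        using that unfolding P_def by simp_all
      ultimately show "w1 x - w2 x = 0" by auto
    qed
    have "(\<lambda>x. w1 x - w2 x) = (\<lambda>x. 0)"
      by (rule uniqp[OF fin finN gpos z _ esc]) (use diffharm[OF that] in simp)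
    then show ?thesis by (simp add: fun_eq_iff)
  qed
  have ex: "\<exists>w. P y w" if y: "\<forall>z. z \<notin> Y \<longrightarrow> y z = 0" for y
  proof -
    obtain u where u: "\<forall>x. x \<notin> H \<longrightarrow> u x = 0"
      "\<forall>p\<in>H. (\<Sum>q\<in>N p. g p q * (u q - u p)) = - (\<Sum>q\<in>N p. g p q * y q)"
      using existp[OF fin finN gpos esc, of "\<lambda>p. - (\<Sum>q\<in>N p. g p q * y q)"] by blast
    define w where "w = (\<lambda>x. u x + y x)"
    have "P y w" unfolding P_def
    proof (intro conjI allI impI ballI)
      fix x assume "x \<notin> R"
      then have "x \<notin> H" "x \<notin> Y" using HR YR by auto
      then show "w x = 0" using u y w_def by simp
    next
      fix x assume "x \<in> Y" then show "w x = y x" using HY u(1) w_def by auto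
    next
      fix x assume "x \<in> Bo"
      then have "x \<notin> H" "x \<notin> Y" using BoH BoY by auto
      then show "w x = 0" using u y w_def by simp
    next
      fix p assume pH: "p \<in> H"
      have yp: "y p = 0" using pH HY y by blast
      have "(\<Sum>q\<in>N p. g p q * (w q - w p)) = (\<Sum>q\<in>N p. g p q * (u q - u p) + g p q * y q)"
        by (rule sum.cong) (simp_all add: w_def yp algebra_simps)
      also have "\<dots> = (\<Sum>q\<in>N p. g p q * (u q - u p)) + (\<Sum>q\<in>N p. g p q * y q)"
        by (rule sum.distrib)
      also have "\<dots> = 0" using u(2) pH by simp
      finally show "(\<Sum>q\<in>N p. g p q * (w q - w p)) = 0" .
    qed
    then show ?thesis by blast
  qed
  have ex1: "\<exists>!w. P y w" if "\<forall>z. z \<notin> Y \<longrightarrow> y z = 0" for y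
    using ex[OF that] uniq by blast
  have "inj_on (\<lambda>y. let w = THE w. P y w in (\<lambda>b. if b \<in> Bo then g b (Q b) * (w (Q b) - w b) else 0)) {y. \<forall>z. z \<notin> Y \<longrightarrow> y z = 0}"
  proof (rule inj_onI)
    fix y1 y2 :: "'a \<Rightarrow> real" assume y1: "y1 \<in> {y. \<forall>z. z \<notin> Y \<longrightarrow> y z = 0}" and y2: "y2 \<in> {y. \<forall>z. z \<notin> Y \<longrightarrow> y z = 0}"
    define w1 where "w1 = (THE w. P y1 w)"
    define w2 where "w2 = (THE w. P y2 w)"
    have y1': "\<forall>z. z \<notin> Y \<longrightarrow> y1 z = 0" using y1 by simp
    have y2': "\<forall>z. z \<notin> Y \<longrightarrow> y2 z = 0" using y2 by simp
    have P1: "P y1 w1" unfolding w1_def by (rule theI'[OF ex1[OF y1']])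
    have P2: "P y2 w2" unfolding w2_def by (rule theI'[OF ex1[OF y2']])
    assume eq: "(let w = THE w. P y1 w in (\<lambda>b. if b \<in> Bo then g b (Q b) * (w (Q b) - w b) else 0)) =
          (let w = THE w. P y2 w in (\<lambda>b. if b \<in> Bo then g b (Q b) * (w (Q b) - w b) else 0))"
    then have eqf: "(\<lambda>b. if b \<in> Bo then g b (Q b) * (w1 (Q b) - w1 b) else 0) =
          (\<lambda>b. if b \<in> Bo then g b (Q b) * (w2 (Q b) - w2 b) else 0)"
      unfolding w1_def w2_def Let_def .
    have eq': "\<forall>b\<in>Bo. g b (Q b) * (w1 (Q b) - w1 b) = g b (Q b) * (w2 (Q b) - w2 b)"
    proof
      fix b assume "b \<in> Bo"
      with fun_cong[OF eqf, of b] show "g b (Q b) * (w1 (Q b) - w1 b) = g b (Q b) * (w2 (Q b) - w2 b)" by simp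
    qed
    have "\<forall>x\<in>Y. w1 x - w2 x = 0"
    proof (rule hprop)
      have "\<forall>x\<in>Bo. w1 x = 0" "\<forall>x\<in>Bo. w2 x = 0" using P1 P2 unfolding P_def by simp_all
      then show "\<forall>x\<in>Bo. w1 x - w2 x = 0" by simp
      show "\<forall>p\<in>H. (\<Sum>q\<in>N p. g p q * ((w1 q - w2 q) - (w1 p - w2 p))) = 0"
        by (rule diffharm[OF P1 P2])
      show "\<forall>b\<in>Bo. g b (Q b) * ((w1 (Q b) - w2 (Q b)) - (w1 b - w2 b)) = 0"
        using eq' by (simp add: algebra_simps)
    qed
    note dY = this
    show "y1 = y2"
    proof
      fix z show "y1 z = y2 z"
      proof (cases "z \<in> Y")
        case True
        have "\<forall>x\<in>Y. w1 x = y1 x" "\<forall>x\<in>Y. w2 x = y2 x" using P1 P2 unfolding P_def by simp_all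
        then have "w1 z = y1 z" "w2 z = y2 z" using True by simp_all
        then show ?thesis using dY True by simp
      next
        case False then show ?thesis using y1' y2' by simp
      qed
    qed
  qed
  then show ?thesis unfolding P_def .
qed

lemma l1dist_nonneg: "0 \<le> l1dist p q"
  unfolding l1dist_def by (simp add: sum_nonneg)

lemma l1dist_sym: "length p = length q \<Longrightarrow> l1dist p q = l1dist q p"
  unfolding l1dist_def by (simp add: abs_minus_commute)

lemma l1dist_zero:
  assumes len: "length p = length q" and z: "l1dist p q = 0"
  shows "p = q"
proof -
  have "\<forall>i\<in>{..<length p}. \<bar>p!i - q!i\<bar> = 0"
    using z unfolding l1dist_def by (subst sum_nonneg_eq_0_iff[symmetric]) auto
  then show "p = q" using len by (intro nth_equalityI) auto
qed

lemma l1dist_upd: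
  assumes "i < length p"
  shows "l1dist p (p[i := v]) = \<bar>p!i - v\<bar>"
proof -
  have "l1dist p (p[i := v]) = (\<Sum>k<length p. if k = i then \<bar>p!i - v\<bar> else 0)"
    unfolding l1dist_def by (rule sum.cong) (auto simp: nth_list_update)
  also have "\<dots> = \<bar>p!i - v\<bar>" using assms by (simp add: sum.delta')
  finally show ?thesis .
qed

lemma l1dist_one:
  assumes len: "length q = length p" and one: "l1dist p q = 1"
  shows "\<exists>i<length p. \<exists>s\<in>{1,-1}. q = p[i := p!i + s]"
proof -
  define f where "f = (\<lambda>k. \<bar>p!k - q!k\<bar>)"
  have sumf: "(\<Sum>k<length p. f k) = 1" using one unfolding l1dist_def f_def .
  have "\<exists>i<length p. f i \<noteq> 0"
  proof (rule ccontr)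
    assume "\<not> ?thesis"
    then have "(\<Sum>k<length p. f k) = 0" by (intro sum.neutral) auto
    then show False using sumf by simp
  qed
  then obtain i where i: "i < length p" "f i \<noteq> 0" by auto
  have fnn: "\<And>k. 0 \<le> f k" unfolding f_def by simp
  have "(\<Sum>k<length p. f k) = f i + (\<Sum>k\<in>{..<length p} - {i}. f k)"
    using i by (simp add: sum.remove)
  moreover have "(\<Sum>k\<in>{..<length p} - {i}. f k) \<ge> 0" using fnn by (simp add: sum_nonneg)
  moreover have "f i \<ge> 1" using i fnn[of i] by linarith
  ultimately have fi: "f i = 1" and rest: "(\<Sum>k\<in>{..<length p} - {i}. f k) = 0" using sumf by linarith+
  have "\<forall>k\<in>{..<length p} - {i}. f k = 0"
    using rest fnn by (subst sum_nonneg_eq_0_iff[symmetric]) auto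
  then have eqk: "\<And>k. k < length p \<Longrightarrow> k \<noteq> i \<Longrightarrow> q!k = p!k" unfolding f_def by auto
  have "q!i = p!i + 1 \<or> q!i = p!i - 1" using fi unfolding f_def by linarith
  then obtain s where s: "s \<in> {1,-1}" "q!i = p!i + s" by force
  have "q = p[i := p!i + s]"
    using len eqk s i by (intro nth_equalityI) (auto simp: nth_list_update)
  then show ?thesis using i s by blast
qed

lemma Dom_mem: "x \<in> Dom d n \<longleftrightarrow> length x = d \<and> (\<forall>i<d. 1 \<le> x!i \<and> x!i \<le> int n)"
  by (simp add: Dom_def)

lemma Dom_finite: "finite (Dom d n)"
proof -
  have "Dom d n \<subseteq> {xs. set xs \<subseteq> {1..int n} \<and> length xs = d}"
    by (auto simp: Dom_def in_set_conv_nth)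
  moreover have "finite {xs. set xs \<subseteq> {1..int n} \<and> length xs = d}"
    by (rule finite_lists_length_eq) simp
  ultimately show ?thesis by (rule finite_subset)
qed

lemma Dom_ne: "1 \<le> n \<Longrightarrow> replicate d 1 \<in> Dom d n"
  by (simp add: Dom_def)

lemma Bd_len: "p \<in> Bd d n \<Longrightarrow> length p = d"
  by (simp add: Bd_def)

lemma Bd_iff:
  assumes n1: "1 \<le> n"
  shows "p \<in> Bd d n \<longleftrightarrow> length p = d \<and> p \<notin> Dom d n \<and> (\<exists>q\<in>Dom d n. l1dist q p = 1)"
proof -
  define D' where "D' = (\<lambda>q. l1dist q p) ` Dom d n"
  have finD: "finite D'" using Dom_finite D'_def by simp
  have neD: "D' \<noteq> {}" using Dom_ne[OF n1] D'_def by auto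
  show ?thesis
  proof
    assume pB: "p \<in> Bd d n"
    then have len: "length p = d" and M: "Min D' = 1" by (auto simp: Bd_def D'_def)
    have "1 \<in> D'" using Min_in[OF finD neD] M by simp
    then have ex: "\<exists>q\<in>Dom d n. l1dist q p = 1" using D'_def by auto
    have "p \<notin> Dom d n"
    proof
      assume "p \<in> Dom d n"
      moreover have "l1dist p p = 0" by (simp add: l1dist_def)
      ultimately have "0 \<in> D'" unfolding D'_def by (metis image_eqI)
      then have "Min D' \<le> 0" using finD by simp
      then show False using M by simp
    qed
    then show "length p = d \<and> p \<notin> Dom d n \<and> (\<exists>q\<in>Dom d n. l1dist q p = 1)" using len ex by simp
  next
    assume h: "length p = d \<and> p \<notin> Dom d n \<and> (\<exists>q\<in>Dom d n. l1dist q p = 1)"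
    have "Min D' = 1"
    proof (rule Min_eqI[OF finD])
      fix y assume "y \<in> D'"
      then obtain q where q: "q \<in> Dom d n" "y = l1dist q p" using D'_def by auto
      have "q \<noteq> p" using q h by auto
      moreover have "length q = length p" using q h by (simp add: Dom_def)
      ultimately have "y \<noteq> 0" using q l1dist_zero[of q p] by auto
      then show "1 \<le> y" using q l1dist_nonneg[of q p] by linarith
    next
      show "1 \<in> D'" using h D'_def by force
    qed
    then show "p \<in> Bd d n" using h by (simp add: Bd_def D'_def)
  qed
qed

lemma Dom_not_Bd: "1 \<le> n \<Longrightarrow> p \<in> Dom d n \<Longrightarrow> p \<notin> Bd d n"
  using Bd_iff by blast

lemma Nbr_Dom:
  assumes n1: "1 \<le> n" and pD: "p \<in> Dom d n"
  shows "q \<in> Nbr d n p \<longleftrightarrow> (\<exists>j<d. \<exists>s\<in>{1,-1}. q = p[j := p!j + s])"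
proof
  have lp: "length p = d" using pD by (simp add: Dom_def)
  assume "q \<in> Nbr d n p"
  then have e: "Edge d n p q" by (simp add: Nbr_def)
  then have "length q = d" by (auto simp: Edge_def Dom_def Bd_def)
  moreover have "l1dist p q = 1" using e by (simp add: Edge_def)
  ultimately show "\<exists>j<d. \<exists>s\<in>{1,-1}. q = p[j := p!j + s]" using l1dist_one lp by metis
next
  have lp: "length p = d" using pD by (simp add: Dom_def)
  assume "\<exists>j<d. \<exists>s\<in>{1,-1}. q = p[j := p!j + s]"
  then obtain j s where j: "j < d" "s \<in> {1,-1}" "q = p[j := p!j + s]" by blast
  have l1: "l1dist p q = 1" using j lp l1dist_upd[of j p] by auto
  have lq: "length q = d" using j lp by simp
  have "q \<in> Dom d n \<or> q \<in> Bd d n"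
  proof (cases "q \<in> Dom d n")
    case False
    have "l1dist q p = 1" using l1 l1dist_sym lq lp by metis
    then have "l1dist p q = 1" using l1 by simp
    then show ?thesis using Bd_iff[OF n1] False lq pD l1dist_sym lp by metis
  qed simp
  then show "q \<in> Nbr d n p"
    unfolding Nbr_def Edge_def using pD l1 Dom_not_Bd[OF n1 pD] by auto
qed

lemma Nbr_finite:
  assumes n1: "1 \<le> n" and pD: "p \<in> Dom d n"
  shows "finite (Nbr d n p)"
proof -
  have "Nbr d n p \<subseteq> (\<lambda>(j,s). p[j := p!j + s]) ` ({..<d} \<times> {1,-1})"
    using Nbr_Dom[OF n1 pD] by force
  then show ?thesis by (rule finite_subset) simp
qed

lemma sum_list_upd: "i < length xs \<Longrightarrow> sum_list (xs[i := v]) = sum_list xs - xs!i + (v::int)"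
proof (induction xs arbitrary: i)
  case Nil then show ?case by simp
next
  case (Cons a xs) then show ?case by (cases i) auto
qed

lemma ssum_upd: "i < length xs \<Longrightarrow> ssum (xs[i := v]) = ssum xs - xs!i + v"
  unfolding ssum_def by (rule sum_list_upd)

definition Psi :: "int \<Rightarrow> int list \<Rightarrow> int" where
  "Psi c x = sum_list (map (\<lambda>a. (a - c)^2) x)"

lemma Psi_upd: "i < length xs \<Longrightarrow> Psi c (xs[i := v]) = Psi c xs - (xs!i - c)^2 + (v - c)^2"
  unfolding Psi_def by (simp add: map_update sum_list_upd)

lemma upd_Dom:
  assumes pD: "p \<in> Dom d n" and j: "j < d" and v: "1 \<le> v" "v \<le> int n"
  shows "p[j := v] \<in> Dom d n"
  using pD j v by (auto simp: Dom_def nth_list_update)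

lemma qb_upd:
  assumes n1: "1 \<le> n" and pD: "p \<in> Dom d n" and j: "j < d" and s: "s \<in> {1,-1}"
    and nD: "p[j := p!j + s] \<notin> Dom d n"
  shows "qb d n (p[j := p!j + s]) = p"
proof -
  define q where "q = p[j := p!j + s]"
  have lp: "length p = d" using pD by (simp add: Dom_def)
  have lq: "length q = d" using lp q_def by simp
  have pj: "1 \<le> p!j" "p!j \<le> int n" using pD j by (auto simp: Dom_def)
  have qj: "q!j = p!j + s" using q_def lp j by simp
  have qout: "q!j < 1 \<or> q!j > int n"
  proof (rule ccontr)
    assume "\<not> ?thesis"
    then have "p[j := p!j + s] \<in> Dom d n" using upd_Dom[OF pD j, of "p!j + s"] qj by simp
    then show False using nD by simp
  qed
  have l1: "l1dist p q = 1" using l1dist_upd[of j p] lp j s q_def by auto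
  show ?thesis unfolding qb_def q_def[symmetric]
  proof (rule the_equality)
    show "p \<in> Dom d n \<and> l1dist p q = 1" using pD l1 by simp
  next
    fix p' assume h: "p' \<in> Dom d n \<and> l1dist p' q = 1"
    have lp': "length p' = d" using h by (simp add: Dom_def)
    have "\<exists>i<length p'. \<exists>s\<in>{1,-1}. q = p'[i := p'!i + s]"
      using l1dist_one[of q p'] h lq lp' by simp
    then obtain k s' where k: "k < d" "s' \<in> {1,-1}" "q = p'[k := p'!k + s']"
      using lp' by blast
    have p'r: "\<And>m. m < d \<Longrightarrow> 1 \<le> p'!m \<and> p'!m \<le> int n" using h by (simp add: Dom_def)
    have kj: "k = j"
    proof (rule ccontr)
      assume "k \<noteq> j"
      then have "q!j = p'!j" using k by simp
      then have "1 \<le> q!j \<and> q!j \<le> int n" using p'r[OF j] by simp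
      then show False using qout by linarith
    qed
    have qj': "q!j = p'!j + s'" using k kj lp' j by simp
    have ss: "s = 1 \<or> s = -1" "s' = 1 \<or> s' = -1" using s k(2) by auto
    have pr': "1 \<le> p'!j" "p'!j \<le> int n" using p'r[OF j] by auto
    have "p'!j = p!j" using ss qj qj' qout pj pr' by (smt (verit))
    moreover have "\<And>m. m < d \<Longrightarrow> m \<noteq> j \<Longrightarrow> p'!m = p!m"
    proof -
      fix m assume "m < d" "m \<noteq> j"
      have "q!m = p'!m" using k(3) kj \<open>m \<noteq> j\<close> by simp
      moreover have "q!m = p!m" using q_def \<open>m \<noteq> j\<close> by simp
      ultimately show "p'!m = p!m" by simp
    qed
    ultimately show "p' = p"
    proof (intro nth_equalityI)
      show "length p' = length p" using lp lp' by simp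
    next
      fix m assume "m < length p'"
      then have "m < d" using lp' by simp
      then show "p'!m = p!m" using \<open>p'!j = p!j\<close> \<open>\<And>m. m < d \<Longrightarrow> m \<noteq> j \<Longrightarrow> p'!m = p!m\<close>
        by (cases "m = j") auto
    qed
  qed
qed

lemma bplus:
  assumes n1: "1 \<le> n" and pD: "p \<in> Dom d n" and j: "j < d" and pj: "p!j = int n"
  defines "q \<equiv> p[j := p!j + 1]"
  shows "q \<in> Bd d n" "Max (set q) = int n + 1" "Min (set q) \<noteq> 0" "ssum q = ssum p + 1"
    "qb d n q = p" "Edge d n q p"
proof -
  have lp: "length p = d" using pD by (simp add: Dom_def)
  have pr: "\<And>m. m < d \<Longrightarrow> 1 \<le> p!m \<and> p!m \<le> int n" using pD by (simp add: Dom_def)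
  have qj: "q!j = int n + 1" using q_def lp j pj by simp
  have nD: "q \<notin> Dom d n" using qj j by (auto simp: Dom_def)
  have l1: "l1dist p q = 1" using l1dist_upd[of j p] lp j q_def by auto
  have lq: "length q = d" using q_def lp by simp
  have l1': "l1dist q p = 1" using l1dist_sym[of q p] lq lp l1 by simp
  have "length q = d \<and> q \<notin> Dom d n \<and> (\<exists>q'\<in>Dom d n. l1dist q' q = 1)"
    using lq nD pD l1 by blast
  then show qB: "q \<in> Bd d n" by (simp add: Bd_iff[OF n1])
  have setq: "\<And>y. y \<in> set q \<Longrightarrow> 1 \<le> y \<and> y \<le> int n + 1"
  proof -
    fix y assume "y \<in> set q"
    then obtain m where m: "m < d" "y = q!m" using lq by (auto simp: in_set_conv_nth)
    show "1 \<le> y \<and> y \<le> int n + 1" using pr[OF m(1)] m q_def lp pj by (cases "m = j") auto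
  qed
  have jin: "int n + 1 \<in> set q" using qj j lq by (metis nth_mem)
  show "Max (set q) = int n + 1" using setq jin by (intro Max_eqI) auto
  have "set q \<noteq> {}" using jin by auto
  then have "Min (set q) \<in> set q" by simp
  then show "Min (set q) \<noteq> 0" using setq by fastforce
  show "ssum q = ssum p + 1" using ssum_upd[of j p] q_def lp j by simp
  show "qb d n q = p" unfolding q_def by (rule qb_upd[OF n1 pD j _ nD[unfolded q_def]]) simp
  show "Edge d n q p" unfolding Edge_def using qB pD l1' Dom_not_Bd[OF n1 pD] by simp
qed

lemma bminus:
  assumes n1: "1 \<le> n" and pD: "p \<in> Dom d n" and j: "j < d" and pj: "p!j = 1"
  defines "q \<equiv> p[j := p!j + -1]"
  shows "q \<in> Bd d n" "Min (set q) = 0" "Max (set q) \<noteq> int n + 1" "ssum q = ssum p - 1"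
    "qb d n q = p" "Edge d n q p"
proof -
  have lp: "length p = d" using pD by (simp add: Dom_def)
  have pr: "\<And>m. m < d \<Longrightarrow> 1 \<le> p!m \<and> p!m \<le> int n" using pD by (simp add: Dom_def)
  have qj: "q!j = 0" using q_def lp j pj by simp
  have nD: "q \<notin> Dom d n" using qj j by (auto simp: Dom_def)
  have l1: "l1dist p q = 1" using l1dist_upd[of j p] lp j q_def by auto
  have lq: "length q = d" using q_def lp by simp
  have l1': "l1dist q p = 1" using l1dist_sym[of q p] lq lp l1 by simp
  have "length q = d \<and> q \<notin> Dom d n \<and> (\<exists>q'\<in>Dom d n. l1dist q' q = 1)"
    using lq nD pD l1 by blast
  then show qB: "q \<in> Bd d n" by (simp add: Bd_iff[OF n1])
  have setq: "\<And>y. y \<in> set q \<Longrightarrow> 0 \<le> y \<and> y \<le> int n"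
  proof -
    fix y assume "y \<in> set q"
    then obtain m where m: "m < d" "y = q!m" using lq by (auto simp: in_set_conv_nth)
    show "0 \<le> y \<and> y \<le> int n" using pr[OF m(1)] m q_def lp pj by (cases "m = j") auto
  qed
  have jin: "0 \<in> set q" using qj j lq by (metis nth_mem)
  show "Min (set q) = 0" using setq jin by (intro Min_eqI) auto
  have "set q \<noteq> {}" using jin by auto
  then have "Max (set q) \<in> set q" by simp
  then show "Max (set q) \<noteq> int n + 1" using setq by fastforce
  show "ssum q = ssum p - 1" using ssum_upd[of j p] q_def lp j by simp
  show "qb d n q = p" unfolding q_def by (rule qb_upd[OF n1 pD j _ nD[unfolded q_def]]) simp
  show "Edge d n q p" unfolding Edge_def using qB pD l1' Dom_not_Bd[OF n1 pD] by simp
qed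

lemma JS_iff: "b \<in> JS d n t \<longleftrightarrow> b \<in> Bd d n \<and> ((ssum b \<le> t \<and> Min (set b) = 0) \<or> (ssum b \<le> t + 1 \<and> Max (set b) = int n + 1))"
  unfolding JS_def KSminus_def KSplus_def Kminus_def Kplus_def by auto

lemma cond_pos: "conductivity d n \<gamma> \<Longrightarrow> Edge d n p q \<Longrightarrow> \<gamma> p q > 0"
  unfolding conductivity_def by blast

lemma argmax_idx:
  fixes x :: "int list"
  assumes "x \<noteq> []"
  shows "\<exists>i<length x. \<forall>j<length x. x!j \<le> x!i"
proof -
  have "Max (set x) \<in> set x" using assms by simp
  then obtain i where i: "i < length x" "x!i = Max (set x)" by (auto simp: in_set_conv_nth)
  have "\<forall>j<length x. x!j \<le> x!i" using i by simp
  then show ?thesis using i by blast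
qed

lemma argmin_idx:
  fixes x :: "int list"
  assumes "x \<noteq> []"
  shows "\<exists>i<length x. \<forall>j<length x. x!i \<le> x!j"
proof -
  have "Min (set x) \<in> set x" using assms by simp
  then obtain i where i: "i < length x" "x!i = Min (set x)" by (auto simp: in_set_conv_nth)
  have "\<forall>j<length x. x!i \<le> x!j" using i by simp
  then show ?thesis using i by blast
qed

lemma prop_T2:
  assumes n1: "1 \<le> n" and d1: "1 \<le> d" and cond: "conductivity d n \<gamma>"
    and a: "\<forall>x\<in>Bd d n - JS d n t. w x = 0"
    and b: "\<forall>p\<in>Dom d n - LevS d n (t+1). (\<Sum>q\<in>Nbr d n p. \<gamma> p q * (w q - w p)) = 0"
    and c: "\<forall>b\<in>Bd d n - JS d n t. \<gamma> b (qb d n b) * (w (qb d n b) - w b) = 0"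
  shows "\<forall>x\<in>Dom d n. t + 1 \<le> ssum x \<longrightarrow> w x = 0"
proof (rule ccontr)
  assume nt: "\<not> (\<forall>x\<in>Dom d n. t + 1 \<le> ssum x \<longrightarrow> w x = 0)"
  define S where "S = {x\<in>Dom d n. t + 1 \<le> ssum x \<and> w x \<noteq> 0}"
  have finS: "finite S" using Dom_finite S_def by simp
  have neS: "S \<noteq> {}" using nt S_def by auto
  define m where "m = Max (Psi 0 ` S)"
  have "m \<in> Psi 0 ` S" unfolding m_def using finS neS by (intro Max_in) auto
  then obtain x where xS: "x \<in> S" and xm: "Psi 0 x = m" by auto
  have xD: "x \<in> Dom d n" and xs: "t + 1 \<le> ssum x" and wx: "w x \<noteq> 0" using xS S_def by auto
  have big: "w y = 0" if "y \<in> Dom d n" "t + 1 \<le> ssum y" "Psi 0 x < Psi 0 y" for y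
  proof (rule ccontr)
    assume "w y \<noteq> 0"
    then have "y \<in> S" using that S_def by simp
    then have "Psi 0 y \<le> m" unfolding m_def using finS by simp
    then show False using that xm by simp
  qed
  have lx: "length x = d" using xD by (simp add: Dom_def)
  have xr: "\<And>k. k < d \<Longrightarrow> 1 \<le> x!k \<and> x!k \<le> int n" using xD by (simp add: Dom_def)
  show False
  proof (cases "\<exists>i<d. x!i = int n")
    case True
    then obtain i where i: "i < d" "x!i = int n" by blast
    define bb where "bb = x[i := x!i + 1]"
    note bp = bplus[OF n1 xD i, folded bb_def]
    have "bb \<notin> JS d n t" using bp(2,3,4) xs by (simp add: JS_iff)
    then have bbo: "bb \<in> Bd d n - JS d n t" using bp(1) by simp
    then have "w bb = 0" using a by blast
    moreover have "\<gamma> bb x * (w x - w bb) = 0" using c bbo bp(5) by metis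
    moreover have "\<gamma> bb x > 0" using cond_pos[OF cond bp(6)] .
    ultimately show False using wx by simp
  next
    case False
    then have xlt: "\<And>k. k < d \<Longrightarrow> x!k < int n" using xr by force
    have "x \<noteq> []" using lx d1 by auto
    from argmax_idx[OF this] obtain i where i: "i < d" and imax: "\<forall>j<d. x!j \<le> x!i"
      unfolding lx by blast
    define p where "p = x[i := x!i + 1]"
    have lp: "length p = d" using p_def lx by simp
    have pD: "p \<in> Dom d n" unfolding p_def using upd_Dom[OF xD i, of "x!i + 1"] xr[OF i] xlt[OF i] by simp
    have ps: "ssum p = ssum x + 1" using ssum_upd[of i x] p_def lx i by simp
    have pPsi: "Psi 0 p = Psi 0 x - (x!i)^2 + (x!i + 1)^2" using Psi_upd[of i x] p_def lx i by simp
    have pbig: "Psi 0 x < Psi 0 p" using pPsi xr[OF i] by (simp add: power2_eq_square algebra_simps)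
    have wp: "w p = 0" using big[OF pD _ pbig] ps xs by simp
    have pH: "p \<in> Dom d n - LevS d n (t+1)" using pD ps xs by (simp add: LevS_def)
    have pi: "p!i = x!i + 1" using p_def lx i by simp
    have xeq: "x = p[i := p!i + -1]" using p_def pi by simp
    have xN: "x \<in> Nbr d n p" using Nbr_Dom[OF n1 pD] i xeq by blast
    have others: "w q = 0" if qN: "q \<in> Nbr d n p" and qx: "q \<noteq> x" for q
    proof -
      obtain j s where j: "j < d" and s: "s \<in> {1,-1}" and qd: "q = p[j := p!j + s]"
        using Nbr_Dom[OF n1 pD] qN by blast
      have qs: "ssum q = ssum p + s" using ssum_upd[of j p] qd lp j by simp
      have qPsi: "Psi 0 q = Psi 0 p - (p!j)^2 + (p!j + s)^2" using Psi_upd[of j p] qd lp j by simp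
      have pjr: "1 \<le> p!j" "p!j \<le> int n" using pD j by (auto simp: Dom_def)
      show "w q = 0"
      proof (cases "s = 1")
        case True
        show ?thesis
        proof (cases "q \<in> Dom d n")
          case True
          have "Psi 0 p < Psi 0 q" using qPsi \<open>s = 1\<close> pjr by (simp add: power2_eq_square algebra_simps)
          then show ?thesis using big[OF True] qs ps xs pbig \<open>s = 1\<close> by simp
        next
          case False
          have pjn: "p!j = int n"
          proof (rule ccontr)
            assume "p!j \<noteq> int n"
            then have "q \<in> Dom d n" using upd_Dom[OF pD j, of "p!j + 1"] pjr qd \<open>s = 1\<close> by simp
            then show False using False by simp
          qed
          note bq = bplus[OF n1 pD j pjn, folded qd[unfolded \<open>s = 1\<close>] ]
          have "q \<notin> JS d n t" using bq(2,3,4) ps xs by (simp add: JS_iff)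
          then show ?thesis using a bq(1) by blast
        qed
      next
        case False
        then have sm: "s = -1" using s by simp
        have ji: "j \<noteq> i"
        proof
          assume "j = i"
          then have "q = x" using qd sm xeq by simp
          then show False using qx by simp
        qed
        have pjx: "p!j = x!j" using p_def ji by simp
        show ?thesis
        proof (cases "q \<in> Dom d n")
          case True
          have "Psi 0 q = Psi 0 x - (x!i)^2 + (x!i + 1)^2 - (x!j)^2 + (x!j - 1)^2"
            using qPsi pPsi pjx sm by simp
          moreover have "x!j \<le> x!i" using imax j by simp
          ultimately have "Psi 0 x < Psi 0 q" by (simp add: power2_eq_square algebra_simps)
          then show ?thesis using big[OF True] qs ps xs sm by simp
        next
          case False
          have pj1: "p!j = 1"
          proof (rule ccontr)
            assume "p!j \<noteq> 1"
            then have "q \<in> Dom d n" using upd_Dom[OF pD j, of "p!j + -1"] pjr qd sm by simp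
            then show False using False by simp
          qed
          note bq = bminus[OF n1 pD j pj1, folded qd[unfolded sm]]
          have "q \<notin> JS d n t" using bq(2,3,4) ps xs by (simp add: JS_iff)
          then show ?thesis using a bq(1) by blast
        qed
      qed
    qed
    have finN: "finite (Nbr d n p)" using Nbr_finite[OF n1 pD] .
    have "(\<Sum>q\<in>Nbr d n p. \<gamma> p q * (w q - w p)) = \<gamma> p x * (w x - w p) + (\<Sum>q\<in>Nbr d n p - {x}. \<gamma> p q * (w q - w p))"
      using finN xN by (simp add: sum.remove)
    also have "(\<Sum>q\<in>Nbr d n p - {x}. \<gamma> p q * (w q - w p)) = 0"
      using others wp by (intro sum.neutral) auto
    finally have e1: "(\<Sum>q\<in>Nbr d n p. \<gamma> p q * (w q - w p)) = \<gamma> p x * (w x - w p)" by simp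
    have "(\<Sum>q\<in>Nbr d n p. \<gamma> p q * (w q - w p)) = 0" using b pH by blast
    then have "\<gamma> p x * w x = 0" using e1 wp by simp
    moreover have "\<gamma> p x > 0" using cond_pos[OF cond] xN by (simp add: Nbr_def)
    ultimately show False using wx by simp
  qed
qed

lemma prop_T2':
  assumes n1: "1 \<le> n" and d1: "1 \<le> d" and cond: "conductivity d n \<gamma>"
    and a: "\<forall>x\<in>JS d n (t - 1). w x = 0"
    and b: "\<forall>p\<in>LevS d n (t - 1). (\<Sum>q\<in>Nbr d n p. \<gamma> p q * (w q - w p)) = 0"
    and c: "\<forall>b\<in>JS d n (t - 1). \<gamma> b (qb d n b) * (w (qb d n b) - w b) = 0"
  shows "\<forall>x\<in>Dom d n. ssum x \<le> t \<longrightarrow> w x = 0"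
proof (rule ccontr)
  assume nt: "\<not> (\<forall>x\<in>Dom d n. ssum x \<le> t \<longrightarrow> w x = 0)"
  define N where "N = int n + 1"
  define S where "S = {x\<in>Dom d n. ssum x \<le> t \<and> w x \<noteq> 0}"
  have finS: "finite S" using Dom_finite S_def by simp
  have neS: "S \<noteq> {}" using nt S_def by auto
  define m where "m = Max (Psi N ` S)"
  have "m \<in> Psi N ` S" unfolding m_def using finS neS by (intro Max_in) auto
  then obtain x where xS: "x \<in> S" and xm: "Psi N x = m" by auto
  have xD: "x \<in> Dom d n" and xs: "ssum x \<le> t" and wx: "w x \<noteq> 0" using xS S_def by auto
  have big: "w y = 0" if "y \<in> Dom d n" "ssum y \<le> t" "Psi N x < Psi N y" for y
  proof (rule ccontr)
    assume "w y \<noteq> 0"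
    then have "y \<in> S" using that S_def by simp
    then have "Psi N y \<le> m" unfolding m_def using finS by simp
    then show False using that xm by simp
  qed
  have lx: "length x = d" using xD by (simp add: Dom_def)
  have xr: "\<And>k. k < d \<Longrightarrow> 1 \<le> x!k \<and> x!k \<le> int n" using xD by (simp add: Dom_def)
  show False
  proof (cases "\<exists>i<d. x!i = 1")
    case True
    then obtain i where i: "i < d" "x!i = 1" by blast
    define bb where "bb = x[i := x!i + -1]"
    note bp = bminus[OF n1 xD i, folded bb_def]
    have "bb \<in> JS d n (t - 1)" using bp(1,2,4) xs by (simp add: JS_iff)
    then have "w bb = 0" using a by blast
    moreover have "\<gamma> bb x * (w x - w bb) = 0" using c \<open>bb \<in> JS d n (t - 1)\<close> bp(5) by metis
    moreover have "\<gamma> bb x > 0" using cond_pos[OF cond bp(6)] .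
    ultimately show False using wx by simp
  next
    case False
    then have xgt: "\<And>k. k < d \<Longrightarrow> 1 < x!k" using xr by force
    have "x \<noteq> []" using lx d1 by auto
    from argmin_idx[OF this] obtain i where i: "i < d" and imin: "\<forall>j<d. x!i \<le> x!j"
      unfolding lx by blast
    define p where "p = x[i := x!i - 1]"
    have lp: "length p = d" using p_def lx by simp
    have pD: "p \<in> Dom d n" unfolding p_def using upd_Dom[OF xD i, of "x!i - 1"] xr[OF i] xgt[OF i] by simp
    have ps: "ssum p = ssum x - 1" using ssum_upd[of i x] p_def lx i by simp
    have pPsi: "Psi N p = Psi N x - (x!i - N)^2 + (x!i - 1 - N)^2" using Psi_upd[of i x] p_def lx i by simp
    have pbig: "Psi N x < Psi N p" using pPsi xr[OF i] N_def by (simp add: power2_eq_square algebra_simps)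
    have wp: "w p = 0" using big[OF pD _ pbig] ps xs by simp
    have pH: "p \<in> LevS d n (t - 1)" using pD ps xs by (simp add: LevS_def)
    have pi: "p!i = x!i - 1" using p_def lx i by simp
    have xeq: "x = p[i := p!i + 1]" using p_def pi by simp
    have xN: "x \<in> Nbr d n p" using Nbr_Dom[OF n1 pD] i xeq by blast
    have others: "w q = 0" if qN: "q \<in> Nbr d n p" and qx: "q \<noteq> x" for q
    proof -
      obtain j s where j: "j < d" and s: "s \<in> {1,-1}" and qd: "q = p[j := p!j + s]"
        using Nbr_Dom[OF n1 pD] qN by blast
      have qs: "ssum q = ssum p + s" using ssum_upd[of j p] qd lp j by simp
      have qPsi: "Psi N q = Psi N p - (p!j - N)^2 + (p!j + s - N)^2" using Psi_upd[of j p] qd lp j by simp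
      have pjr: "1 \<le> p!j" "p!j \<le> int n" using pD j by (auto simp: Dom_def)
      show "w q = 0"
      proof (cases "s = -1")
        case True
        show ?thesis
        proof (cases "q \<in> Dom d n")
          case True
          have "Psi N p < Psi N q" using qPsi \<open>s = -1\<close> pjr N_def by (simp add: power2_eq_square algebra_simps)
          then show ?thesis using big[OF True] qs ps xs pbig \<open>s = -1\<close> by simp
        next
          case False
          have pj1: "p!j = 1"
          proof (rule ccontr)
            assume "p!j \<noteq> 1"
            then have "q \<in> Dom d n" using upd_Dom[OF pD j, of "p!j + -1"] pjr qd \<open>s = -1\<close> by simp
            then show False using False by simp
          qed
          note bq = bminus[OF n1 pD j pj1, folded qd[unfolded \<open>s = -1\<close>] ]
          have "q \<in> JS d n (t - 1)" using bq(1,2,4) ps xs by (simp add: JS_iff)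
          then show ?thesis using a by blast
        qed
      next
        case False
        then have sp: "s = 1" using s by simp
        have ji: "j \<noteq> i"
        proof
          assume "j = i"
          then have "q = x" using qd sp xeq by simp
          then show False using qx by simp
        qed
        have pjx: "p!j = x!j" using p_def ji by simp
        show ?thesis
        proof (cases "q \<in> Dom d n")
          case True
          have "Psi N q = Psi N x - (x!i - N)^2 + (x!i - 1 - N)^2 - (x!j - N)^2 + (x!j + 1 - N)^2"
            using qPsi pPsi pjx sp by simp
          moreover have "x!i \<le> x!j" using imin j by simp
          ultimately have "Psi N x < Psi N q" by (simp add: power2_eq_square algebra_simps)
          then show ?thesis using big[OF True] qs ps xs sp by simp
        next
          case False
          have pjn: "p!j = int n"
          proof (rule ccontr)
            assume "p!j \<noteq> int n"
            then have "q \<in> Dom d n" using upd_Dom[OF pD j, of "p!j + 1"] pjr qd sp by simp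
            then show False using False by simp
          qed
          note bq = bplus[OF n1 pD j pjn, folded qd[unfolded sp]]
          have "q \<in> JS d n (t - 1)" using bq(1,2,4) ps xs by (simp add: JS_iff)
          then show ?thesis using a by blast
        qed
      qed
    qed
    have finN: "finite (Nbr d n p)" using Nbr_finite[OF n1 pD] .
    have "(\<Sum>q\<in>Nbr d n p. \<gamma> p q * (w q - w p)) = \<gamma> p x * (w x - w p) + (\<Sum>q\<in>Nbr d n p - {x}. \<gamma> p q * (w q - w p))"
      using finN xN by (simp add: sum.remove)
    also have "(\<Sum>q\<in>Nbr d n p - {x}. \<gamma> p q * (w q - w p)) = 0"
      using others wp by (intro sum.neutral) auto
    finally have e1: "(\<Sum>q\<in>Nbr d n p. \<gamma> p q * (w q - w p)) = \<gamma> p x * (w x - w p)" by simp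
    have "(\<Sum>q\<in>Nbr d n p. \<gamma> p q * (w q - w p)) = 0" using b pH by blast
    then have "\<gamma> p x * w x = 0" using e1 wp by simp
    moreover have "\<gamma> p x > 0" using cond_pos[OF cond] xN by (simp add: Nbr_def)
    ultimately show False using wx by simp
  qed
qed

theorem proposition3p3:
  fixes d n :: nat and \<gamma> :: "int list \<Rightarrow> int list \<Rightarrow> real"
  assumes "d \<ge> 2" and "n \<ge> 1" and "conductivity d n \<gamma>"
  shows "(\<forall>t::int. int d - 1 \<le> t \<and> t \<le> int d * int n - 1 \<longrightarrow>
            inj_on (T2 d n \<gamma> t) {y. \<forall>z. z \<notin> Lev d n (t + 1) \<longrightarrow> y z = 0})
       \<and> (\<forall>t::int. int d \<le> t \<and> t \<le> int d * int n \<longrightarrow>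
            inj_on (T2' d n \<gamma> t) {x. \<forall>z. z \<notin> Lev d n t \<longrightarrow> x z = 0})"
proof -
  have n1: "1 \<le> n" and d1: "1 \<le> d" and cond: "conductivity d n \<gamma>" using assms by auto
  have finN: "\<forall>p\<in>H. finite (Nbr d n p)" if "H \<subseteq> Dom d n" for H
    using Nbr_finite[OF n1] that by blast
  have gpos: "\<forall>p\<in>H. \<forall>q\<in>Nbr d n p. \<gamma> p q > 0" for H
    using cond_pos[OF cond] by (simp add: Nbr_def)
  have DB: "x \<in> Dom d n \<Longrightarrow> x \<notin> Bd d n" for x using Dom_not_Bd[OF n1] by blast
  have JSB: "JS d n s \<subseteq> Bd d n" for s by (auto simp: JS_iff)
  have part1: "inj_on (T2 d n \<gamma> t) {y. \<forall>z. z \<notin> Lev d n (t + 1) \<longrightarrow> y z = 0}" for t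
    unfolding T2_def[abs_def]
  proof (rule generic_inj[where f = ssum])
    show "finite (Dom d n - LevS d n (t + 1))" using Dom_finite by simp
    show "\<forall>p\<in>Dom d n - LevS d n (t + 1). finite (Nbr d n p)" by (rule finN) auto
    show "\<forall>p\<in>Dom d n - LevS d n (t + 1). \<forall>q\<in>Nbr d n p. 0 < \<gamma> p q" by (rule gpos)
    show "\<forall>p\<in>Dom d n - LevS d n (t + 1). \<exists>q\<in>Nbr d n p. ssum p < ssum q"
    proof
      fix p assume "p \<in> Dom d n - LevS d n (t + 1)"
      then have pD: "p \<in> Dom d n" by simp
      have lp: "length p = d" using pD by (simp add: Dom_def)
      have "p[0 := p!0 + 1] \<in> Nbr d n p" using Nbr_Dom[OF n1 pD] d1 by force
      moreover have "ssum (p[0 := p!0 + 1]) = ssum p + 1" using ssum_upd[of 0 p] lp d1 by simp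
      ultimately show "\<exists>q\<in>Nbr d n p. ssum p < ssum q" by force
    qed
    show "Dom d n - LevS d n (t + 1) \<subseteq> Dom d n - LevS d n t \<union> (Bd d n - JS d n t)"
      by (auto simp: LevS_def)
    show "Lev d n (t + 1) \<subseteq> Dom d n - LevS d n t \<union> (Bd d n - JS d n t)"
      by (auto simp: LevS_def Lev_def)
    show "(Dom d n - LevS d n (t + 1)) \<inter> Lev d n (t + 1) = {}"
      by (auto simp: LevS_def Lev_def)
    show "(Bd d n - JS d n t) \<inter> (Dom d n - LevS d n (t + 1)) = {}" using DB by auto
    show "(Bd d n - JS d n t) \<inter> Lev d n (t + 1) = {}" using DB by (auto simp: Lev_def)
    show "Dom d n - LevS d n t \<union> (Bd d n - JS d n t)
        \<subseteq> Dom d n - LevS d n (t + 1) \<union> Lev d n (t + 1) \<union> (Bd d n - JS d n t)"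
      by (auto simp: LevS_def Lev_def)
    fix u :: "int list \<Rightarrow> real"
    assume h1: "\<forall>x\<in>Bd d n - JS d n t. u x = 0"
      and h2: "\<forall>p\<in>Dom d n - LevS d n (t + 1). (\<Sum>q\<in>Nbr d n p. \<gamma> p q * (u q - u p)) = 0"
      and h3: "\<forall>b\<in>Bd d n - JS d n t. \<gamma> b (qb d n b) * (u (qb d n b) - u b) = 0"
    have "\<forall>x\<in>Dom d n. t + 1 \<le> ssum x \<longrightarrow> u x = 0" by (rule prop_T2[OF n1 d1 cond h1 h2 h3])
    then show "\<forall>x\<in>Lev d n (t + 1). u x = 0" by (auto simp: Lev_def)
  qed
  have part2: "inj_on (T2' d n \<gamma> t) {x. \<forall>z. z \<notin> Lev d n t \<longrightarrow> x z = 0}" for t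
    unfolding T2'_def[abs_def]
  proof (rule generic_inj[where f = "\<lambda>x. - ssum x"])
    show "finite (LevS d n (t - 1))" using Dom_finite by (simp add: LevS_def)
    show "\<forall>p\<in>LevS d n (t - 1). finite (Nbr d n p)" by (rule finN) (auto simp: LevS_def)
    show "\<forall>p\<in>LevS d n (t - 1). \<forall>q\<in>Nbr d n p. 0 < \<gamma> p q" by (rule gpos)
    show "\<forall>p\<in>LevS d n (t - 1). \<exists>q\<in>Nbr d n p. - ssum p < - ssum q"
    proof
      fix p assume "p \<in> LevS d n (t - 1)"
      then have pD: "p \<in> Dom d n" by (simp add: LevS_def)
      have lp: "length p = d" using pD by (simp add: Dom_def)
      have "p[0 := p!0 + -1] \<in> Nbr d n p" using Nbr_Dom[OF n1 pD] d1 by force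
      moreover have "ssum (p[0 := p!0 + -1]) = ssum p - 1" using ssum_upd[of 0 p] lp d1 by simp
      ultimately show "\<exists>q\<in>Nbr d n p. - ssum p < - ssum q" by force
    qed
    show "LevS d n (t - 1) \<subseteq> LevS d n t \<union> JS d n (t - 1)"
      by (auto simp: LevS_def)
    show "Lev d n t \<subseteq> LevS d n t \<union> JS d n (t - 1)"
      by (auto simp: LevS_def Lev_def)
    show "LevS d n (t - 1) \<inter> Lev d n t = {}"
      by (auto simp: LevS_def Lev_def)
    show "JS d n (t - 1) \<inter> LevS d n (t - 1) = {}" using DB JSB by (auto simp: LevS_def)
    show "JS d n (t - 1) \<inter> Lev d n t = {}" using DB JSB by (auto simp: Lev_def)
    show "LevS d n t \<union> JS d n (t - 1) \<subseteq> LevS d n (t - 1) \<union> Lev d n t \<union> JS d n (t - 1)"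
      by (auto simp: LevS_def Lev_def)
    fix u :: "int list \<Rightarrow> real"
    assume h1: "\<forall>x\<in>JS d n (t - 1). u x = 0"
      and h2: "\<forall>p\<in>LevS d n (t - 1). (\<Sum>q\<in>Nbr d n p. \<gamma> p q * (u q - u p)) = 0"
      and h3: "\<forall>b\<in>JS d n (t - 1). \<gamma> b (qb d n b) * (u (qb d n b) - u b) = 0"
    have "\<forall>x\<in>Dom d n. ssum x \<le> t \<longrightarrow> u x = 0" by (rule prop_T2'[OF n1 d1 cond h1 h2 h3])
    then show "\<forall>x\<in>Lev d n t. u x = 0" by (auto simp: Lev_def)
  qed
  show ?thesis using part1 part2 by blast
qed

end
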